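(* Let $\varPhi\subset\mathbb{E}^3$ be a skew ruled surface with invariants $\delta,\kappa,\lambda$, right normalized with support function $q=\frac{f(u)+g(u)v}{w}$, neither $f$ nor $g$ the zero function, and let $\overline{T}$ be its Tchebychev vector field. Then: (a) $\overline{T}$ is tangential to the $\widetilde{K}$-curves of $\varPhi$ if and only if $\varPhi$ is conoidal with constant distribution parameter $\delta=c_1\neq0$, $g$ is a nonvanishing constant $c_2$, and $f=c_1c_2\int\lambda\,\mathrm{d}u+c_3$, $c_3\in\mathbb{R}$; (b) $\overline{T}$ is orthogonal to the $\widetilde{K}$-curves of $\varPhi$ if and only if $\varPhi$ is an Edlinger surface and $g$ and $f$ are nonvanishing constants $c_1$ and $c_2$, respectively.
   Context: $\varPhi$ is a ruled $C^r$-surface ($r\ge3$) with nonvanishing Gaussian curvature, in standard parameters $\overline{x}(u,v)=\overline{s}(u)+v\,\overline{e}(u)$, $|\overline{e}|=|\overline{e}'|=1$, $\langle\overline{s}',\overline{e}'\rangle=0$. Frame $\overline{n}=\overline{e}'$, $\overline{z}=\overline{e}\times\overline{n}$. Invariants: distribution parameter $\delta=(\overline{s}',\overline{e},\overline{e}')\neq0$, conical curvature $\kappa=(\overline{e},\overline{e}',\overline{e}'')$, $\lambda=\cot\sphericalangle(\overline{e},\overline{s}')$, $\overline{s}'=\delta\lambda\overline{e}+\delta\overline{z}$. Conoidal means $\kappa\equiv0$. An Edlinger surface is a ruled surface whose osculating quadrics are rotational hyperboloids, characterized by $\delta'=\kappa\lambda+1=0$. $w=\sqrt{\delta^2+v^2}$,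 $\overline{\xi}=(\delta\overline{n}-v\overline{z})/w$, Gaussian curvature $\widetilde{K}=-\delta^2/w^4$. The $\widetilde{K}$-curves are the curves along which $\widetilde{K}$ is constant, i.e. curves $v=v(u)$ with $2\delta vv'+\delta'(\delta^2-v^2)=0$. $h_{11}=-(\kappa w^2+\delta'v-\delta^2\lambda)/w$, $h_{12}=\delta/w$, $h_{22}=0$. A relative normalization is determined by its support function $q=\langle\overline{\xi},\overline{y}\rangle\neq0$; right normalization: $q=(f+gv)/w$, $f,g$ functions of $u$. Relative metric $G_{ij}=q^{-1}h_{ij}$, Darboux tensor $A_{ijk}=q^{-1}\langle\overline{\xi},\nabla^G_k\nabla^G_j\overline{x}_{/i}\rangle$, Tchebychev vector $\overline{T}=T^m\overline{x}_{/m}$, $T^m=\frac12A_i^{\ im}$; equivalently $T^1=\frac{w^2q_{/2}+vq}{\delta w}$, $T^2=\frac{2\delta w^2q_{/1}+\delta'q(\delta^2-v^2)}{2\delta^2w}+\frac{T^1(\kappa w^2+\delta'v-\delta^2\lambda)}{\delta}$. "Tangential/orthogonal to a family of curves" means at every point $\overline{T}$ is parallel/orthogonal to the tangent of the curve of the family through that point. $\int\cdots\mathrm{d}u$ denotes an antiderivative. *)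

theory Defs
  imports "HOL-Analysis.Analysis"
begin

text \<open>Ruled surface x(u,v) = s(u) + v e(u) in standard parameters.
  s1 = s', e1 = e', e2 = e'' are given explicitly as derivative functions.\<close>

definition triple :: "real^3 \<Rightarrow> real^3 \<Rightarrow> real^3 \<Rightarrow> real" where
  "triple a b c = a \<bullet> cross3 b c"

definition dpar :: "(real \<Rightarrow> real^3) \<Rightarrow> (real \<Rightarrow> real^3) \<Rightarrow> (real \<Rightarrow> real^3) \<Rightarrow> real \<Rightarrow> real" where
  "dpar s1 e e1 u = triple (s1 u) (e u) (e1 u)"

definition ccurv :: "(real \<Rightarrow> real^3) \<Rightarrow> (real \<Rightarrow> real^3) \<Rightarrow> (real \<Rightarrow> real^3) \<Rightarrow> real \<Rightarrow> real" where
  "ccurv e e1 e2 u = triple (e u) (e1 u) (e2 u)"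

text \<open>lambda, determined by s' = delta lambda e + delta z\<close>
definition lam :: "(real \<Rightarrow> real^3) \<Rightarrow> (real \<Rightarrow> real^3) \<Rightarrow> (real \<Rightarrow> real^3) \<Rightarrow> real \<Rightarrow> real" where
  "lam s1 e e1 u = (s1 u \<bullet> e u) / dpar s1 e e1 u"

definition wfun :: "(real \<Rightarrow> real) \<Rightarrow> real \<Rightarrow> real \<Rightarrow> real" where
  "wfun d u v = sqrt ((d u)^2 + v^2)"

definition suppq :: "(real \<Rightarrow> real) \<Rightarrow> (real \<Rightarrow> real) \<Rightarrow> (real \<Rightarrow> real) \<Rightarrow> real \<Rightarrow> real \<Rightarrow> real" where
  "suppq f g d u v = (f u + g u * v) / wfun d u v"

definition tch1 :: "(real \<Rightarrow> real \<Rightarrow> real) \<Rightarrow> (real \<Rightarrow> real) \<Rightarrow> real \<Rightarrow> real \<Rightarrow> real" where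
  "tch1 q d u v =
     ((wfun d u v)^2 * deriv (\<lambda>t. q u t) v + v * q u v) / (d u * wfun d u v)"

definition tch2 :: "(real \<Rightarrow> real \<Rightarrow> real) \<Rightarrow> (real \<Rightarrow> real) \<Rightarrow> (real \<Rightarrow> real) \<Rightarrow> (real \<Rightarrow> real)
     \<Rightarrow> real \<Rightarrow> real \<Rightarrow> real" where
  "tch2 q d k l u v =
     (2 * d u * (wfun d u v)^2 * deriv (\<lambda>t. q t v) u + deriv d u * q u v * ((d u)^2 - v^2))
       / (2 * (d u)^2 * wfun d u v)
     + tch1 q d u v * (k u * (wfun d u v)^2 + deriv d u * v - (d u)^2 * l u) / d u"

text \<open>Tchebychev vector T = T^1 x_u + T^2 x_v of the surface with the right
  normalization q = (f + g v)/w, where x_u = s' + v e', x_v = e.\<close>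
definition tchvec :: "(real \<Rightarrow> real^3) \<Rightarrow> (real \<Rightarrow> real^3) \<Rightarrow> (real \<Rightarrow> real^3) \<Rightarrow> (real \<Rightarrow> real^3)
     \<Rightarrow> (real \<Rightarrow> real) \<Rightarrow> (real \<Rightarrow> real) \<Rightarrow> real \<Rightarrow> real \<Rightarrow> real^3" where
  "tchvec s1 e e1 e2 f g u v =
     (let d = dpar s1 e e1; q = suppq f g d in
      tch1 q d u v *\<^sub>R (s1 u + v *\<^sub>R e1 u)
      + tch2 q d (ccurv e e1 e2) (lam s1 e e1) u v *\<^sub>R e u)"

text \<open>Tangent vector of the K-curve through (u,v): the direction (du,dv) annihilated by
  2 delta v dv + delta' (delta^2 - v^2) du = 0, i.e. (du,dv) = (2 delta v, -delta'(delta^2-v^2)),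
  mapped to the surface: 2 delta v x_u - delta'(delta^2 - v^2) x_v.\<close>
definition kcurve_tan :: "(real \<Rightarrow> real^3) \<Rightarrow> (real \<Rightarrow> real^3) \<Rightarrow> (real \<Rightarrow> real^3)
     \<Rightarrow> real \<Rightarrow> real \<Rightarrow> real^3" where
  "kcurve_tan s1 e e1 u v =
     (let d = dpar s1 e e1 in
      (2 * d u * v) *\<^sub>R (s1 u + v *\<^sub>R e1 u)
      - (deriv d u * ((d u)^2 - v^2)) *\<^sub>R e u)"

definition conoidal :: "(real \<Rightarrow> real^3) \<Rightarrow> (real \<Rightarrow> real^3) \<Rightarrow> (real \<Rightarrow> real^3) \<Rightarrow> real set \<Rightarrow> bool" where
  "conoidal e e1 e2 I \<longleftrightarrow> (\<forall>u\<in>I. ccurv e e1 e2 u = 0)"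

definition edlinger :: "(real \<Rightarrow> real^3) \<Rightarrow> (real \<Rightarrow> real^3) \<Rightarrow> (real \<Rightarrow> real^3) \<Rightarrow> (real \<Rightarrow> real^3)
     \<Rightarrow> real set \<Rightarrow> bool" where
  "edlinger s1 e e1 e2 I \<longleftrightarrow>
     (\<forall>u\<in>I. deriv (dpar s1 e e1) u = 0 \<and> ccurv e e1 e2 u * lam s1 e e1 u + 1 = 0)"

end

theory Submission
  imports Defs "HOL-Computational_Algebra.Polynomial"
begin


lemma poly4_zero:
  fixes c0 c1 c2 c3 c4 F G :: real
  assumes H: "\<forall>v. F + G* v \<noteq> 0 \<longrightarrow> c0 + c1* v + c2* v^2 + c3* v^3 + c4* v^4 = 0"
    and nz: "F \<noteq> 0 \<or> G \<noteq> 0"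
  shows "c0 = 0 \<and> c1 = 0 \<and> c2 = 0 \<and> c3 = 0 \<and> c4 = 0"
proof -
  define p where "p = [:c0,c1,c2,c3,c4:]"
  have pv: "poly p v = c0 + c1* v + c2* v^2 + c3* v^3 + c4* v^4" for v
    by (simp add: p_def algebra_simps power2_eq_square power3_eq_cube power4_eq_xxxx)
  have fin: "finite {v::real. F + G* v = 0}"
  proof (cases "G = 0")
    case True then show ?thesis using nz by simp
  next
    case False
    then have "{v::real. F + G* v = 0} \<subseteq> {-F/G}" by (auto simp: field_simps)
    then show ?thesis using finite_subset by blast
  qed
  have "p = 0"
  proof (rule ccontr)
    assume "p \<noteq> 0"
    then have "finite {x. poly p x = 0}" by (rule poly_roots_finite)
    moreover have "UNIV \<subseteq> {x. poly p x = 0} \<union> {v::real. F + G* v = 0}"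
      using H pv by auto
    ultimately have "finite (UNIV::real set)" using fin finite_subset by blast
    then show False using infinite_UNIV_char_0 by blast
  qed
  then show ?thesis by (simp add: p_def)
qed

lemma loc_const:
  fixes g :: "real \<Rightarrow> real"
  assumes I: "is_interval I" "open I" and gd: "\<forall>u\<in>I. g differentiable (at u)"
    and u0: "u0 \<in> I" "g u0 \<noteq> 0" and dz: "\<forall>u\<in>I. g u \<noteq> 0 \<longrightarrow> deriv g u = 0"
  shows "\<forall>u\<in>I. g u = g u0"
proof -
  define S where "S = {u\<in>I. g u = g u0}"
  have cont: "continuous_on I g"
    using gd by (meson continuous_at_imp_continuous_on differentiable_imp_continuous_within)
  have cl: "closedin (top_of_set I) S"
    unfolding S_def by (rule continuous_closedin_preimage_constant[OF cont])
  have op: "open S"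
  proof (rule openI)
    fix x assume xS: "x \<in> S"
    then have xI: "x \<in> I" and gx: "g x = g u0" by (auto simp: S_def)
    have "isCont g x" using gd xI differentiable_imp_continuous_within by blast
    then have "\<forall>\<^sub>F y in at x. g y \<noteq> 0"
      using u0 gx by (metis tendsto_imp_eventually_ne isCont_def)
    then obtain e1 where e1: "e1 > 0" "\<And>y. y \<noteq> x \<Longrightarrow> dist y x < e1 \<Longrightarrow> g y \<noteq> 0"
      by (auto simp: eventually_at)
    obtain e2 where e2: "e2 > 0" "ball x e2 \<subseteq> I" using I(2) xI open_contains_ball by blast
    define e where "e = min e1 e2"
    have B: "\<And>y. y \<in> ball x e \<Longrightarrow> y \<in> I \<and> g y \<noteq> 0"
      using e1 e2 u0 gx by (auto simp: e_def dist_commute) (metis dist_commute)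
    have "\<exists>c. \<forall>y\<in>ball x e. g y = c"
    proof (rule has_field_derivative_zero_constant)
      show "convex (ball x e)" by simp
      fix y assume "y \<in> ball x e"
      then have "y \<in> I" "g y \<noteq> 0" using B by auto
      then have "(g has_field_derivative deriv g y) (at y)" "deriv g y = 0"
        using gd dz DERIV_deriv_iff_real_differentiable by metis+
      then show "(g has_field_derivative 0) (at y within ball x e)"
        using has_field_derivative_at_within by fastforce
    qed
    then obtain c where c: "\<forall>y\<in>ball x e. g y = c" by blast
    have "e > 0" using e1 e2 by (simp add: e_def)
    then have "g x = c" using c by simp
    then have "ball x e \<subseteq> S" using B c gx by (auto simp: S_def)
    then show "\<exists>e>0. ball x e \<subseteq> S" using \<open>e > 0\<close> by blast
  qed
  have "openin (top_of_set I) S" unfolding openin_open using op by (intro exI[of _ S]) (auto simp: S_def)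
  moreover have "connected I" using I(1) is_interval_connected by blast
  ultimately have "S = {} \<or> S = I" using cl connected_clopen by blast
  moreover have "u0 \<in> S" using u0 by (simp add: S_def)
  ultimately show ?thesis by (auto simp: S_def)
qed



lemma qv_deriv:
  fixes f g d :: "real \<Rightarrow> real"
  assumes "d u \<noteq> 0"
  shows "deriv (\<lambda>t. suppq f g d u t) v =
     (g u * wfun d u v ^ 2 - (f u + g u * v) * v) / wfun d u v ^ 3"
proof -
  let ?w = "wfun d u v"
  have pos: "(d u)^2 + v^2 > 0" using assms by (simp add: add_pos_nonneg)
  have w2: "?w^2 = (d u)^2 + v^2" using pos by (simp add: wfun_def)
  have wp: "?w > 0" using pos by (simp add: wfun_def)
  have "((\<lambda>t. (f u + g u * t) / sqrt ((d u)^2 + t^2)) has_real_derivative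
     (g u * sqrt ((d u)^2 + v^2) - (f u + g u * v) * (inverse (sqrt ((d u)^2 + v^2)) / 2 * (2 * v))) /
       (sqrt ((d u)^2 + v^2))^2) (at v)"
    using pos by (auto intro!: derivative_eq_intros simp: power2_eq_square)
  then have "deriv (\<lambda>t. suppq f g d u t) v = 
     (g u * ?w - (f u + g u * v) * (inverse ?w / 2 * (2 * v))) / ?w^2"
    unfolding suppq_def wfun_def by (rule DERIV_imp_deriv)
  also have "\<dots> = (g u * ?w ^ 2 - (f u + g u * v) * v) / ?w ^ 3"
    using wp by (simp add: field_simps power2_eq_square power3_eq_cube)
  finally show ?thesis .
qed

lemma qu_deriv:
  fixes f g d :: "real \<Rightarrow> real"
  assumes "d u \<noteq> 0" "(d has_real_derivative d') (at u)"
    "(f has_real_derivative f') (at u)" "(g has_real_derivative g') (at u)"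
  shows "deriv (\<lambda>t. suppq f g d t v) u =
     (f' + g' * v) / wfun d u v - (f u + g u * v) * d u * d' / wfun d u v ^ 3"
proof -
  let ?w = "wfun d u v"
  have pos: "(d u)^2 + v^2 > 0" using assms by (simp add: add_pos_nonneg)
  have wp: "?w > 0" using pos by (simp add: wfun_def)
  have "((\<lambda>t. (f t + g t * v) / sqrt ((d t)^2 + v^2)) has_real_derivative
     ((f' + g' * v) * sqrt ((d u)^2 + v^2) - (f u + g u * v) * (inverse (sqrt ((d u)^2 + v^2)) / 2 * (2 * d u * d'))) /
       (sqrt ((d u)^2 + v^2))^2) (at u)"
    using pos assms by (auto intro!: derivative_eq_intros simp: power2_eq_square)
  then have "deriv (\<lambda>t. suppq f g d t v) u = 
     ((f' + g' * v) * ?w - (f u + g u * v) * (inverse ?w / 2 * (2 * d u * d'))) / ?w^2"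
    unfolding suppq_def wfun_def by (rule DERIV_imp_deriv)
  also have "\<dots> = (f' + g' * v) / ?w - (f u + g u * v) * d u * d' / ?w ^ 3"
    using wp by (simp add: field_simps power2_eq_square power3_eq_cube)
  finally show ?thesis .
qed

lemma tch1_eq:
  assumes "d u \<noteq> 0"
  shows "tch1 (suppq f g d) d u v = g u / d u"
proof -
  let ?w = "wfun d u v"
  have pos: "(d u)^2 + v^2 > 0" using assms by (simp add: add_pos_nonneg)
  have w2: "?w^2 = (d u)^2 + v^2" using pos by (simp add: wfun_def)
  have wp: "?w > 0" using pos by (simp add: wfun_def)
  show ?thesis unfolding tch1_def qv_deriv[of d u f g v, OF assms]
    using wp assms by (simp add: suppq_def field_simps power2_eq_square power3_eq_cube)
qed

lemma alg_tch2:
  fixes A N D D' W v G K L :: real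
  assumes "W > 0" "W^2 = D^2 + v^2" "D \<noteq> 0"
  shows "(2*D*W^2*(A/W - N*D*D'/W^3) + D'*(N/W)*(D^2-v^2))/(2*D^2*W) + G/D*(K*W^2 + D' * v - D^2*L)/D
     = A/D - D'*N/(2*D^2) + G*(K*(D^2+v^2)+D' * v - D^2*L)/D^2"
proof -
  have "W \<noteq> 0" using assms by simp
  then show ?thesis using assms(2,3) apply (simp add: field_simps)
    by algebra
qed

lemma tch2_eq:
  assumes "d u \<noteq> 0" "(d has_real_derivative d') (at u)"
    "(f has_real_derivative f') (at u)" "(g has_real_derivative g') (at u)"
  shows "tch2 (suppq f g d) d k l u v =
     (f' + g' * v) / d u - d' * (f u + g u * v) / (2 * (d u)^2)
     + g u * (k u * ((d u)^2 + v^2) + d' * v - (d u)^2 * l u) / (d u)^2"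
proof -
  let ?w = "wfun d u v"
  have pos: "(d u)^2 + v^2 > 0" using assms by (simp add: add_pos_nonneg)
  have w2: "?w^2 = (d u)^2 + v^2" using pos by (simp add: wfun_def)
  have wp: "?w > 0" using pos by (simp add: wfun_def)
  have dd: "deriv d u = d'" using assms(2) by (rule DERIV_imp_deriv)
  show ?thesis unfolding tch2_def qu_deriv[of d u, OF assms] tch1_eq[of d u f g v, OF assms(1)] dd
    unfolding suppq_def by (rule alg_tch2[OF wp w2 assms(1)])
qed



definition "T2c D D' F Fp G Gp K L v = (Fp + Gp * v) / D - D' * (F + G * v) / (2 * D^2)
     + G * (K * (D^2 + v^2) + D' * v - D^2 * L) / D^2"

definition "pz D D' F Fp G K L = 2*D*Fp - D'*F + 2*G*K*D^2 - 2*G*D^2*L"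

lemma QA_eq:
  fixes D D' F Fp G Gp K L v :: real
  assumes "D \<noteq> 0"
  shows "(G/D) * (- (D' * (D^2 - v^2))) - T2c D D' F Fp G Gp K L v * (2*D* v)
    = ((-G*D'*D^2) + (- pz D D' F Fp G K L) * v + (-2*D*Gp) * v^2 + (-2*G*K) * v^3 + 0 * v^4) / D"
  using assms unfolding T2c_def pz_def apply (simp add: field_simps) by algebra

lemma QB_eq:
  fixes D D' F Fp G Gp K L v :: real
  assumes "D \<noteq> 0"
  shows "(G/D) * (2*D* v) * (D^2*L^2 + D^2 + v^2) + (T2c D D' F Fp G Gp K L v * (2*D* v) - (G/D) * (D' * (D^2 - v^2))) * (D*L)
     - T2c D D' F Fp G Gp K L v * (D' * (D^2 - v^2))
    = ((-2*D^4*D'*G*L - D'*D^2*pz D D' F Fp G K L)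
       + (4*D^4*G*(L^2+1) - D'*D^2*(2*D*Gp+G*D') + 2*D^2*L*pz D D' F Fp G K L) * v
       + (2*D^2*D'*G*L - 2*D'*D^2*G*K + 2*D^2*L*(2*D*Gp+G*D') + D'*pz D D' F Fp G K L) * v^2
       + (4*D^2*G + 4*D^2*L*G*K + D'*(2*D*Gp+G*D')) * v^3
       + (2*G*K*D') * v^4) / (2*D^2)"
  using assms unfolding T2c_def pz_def apply (simp add: field_simps) by algebra

lemma A_fwd:
  fixes D D' F Fp G Gp K L :: real
  assumes "D \<noteq> 0" "G \<noteq> 0" "-G*D'*D^2 = 0" "- pz D D' F Fp G K L = 0" "-2*D*Gp = 0" "-2*G*K = 0"
  shows "D' = 0 \<and> Gp = 0 \<and> K = 0 \<and> Fp = G*D*L"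
proof -
  have 1: "D' = 0" using assms by simp
  have 2: "Gp = 0" "K = 0" using assms by simp_all
  have "2*D*Fp = 2*G*D^2*L" using assms(4) 1 2 unfolding pz_def by simp
  then have "Fp = G*D*L" using assms(1) by (simp add: power2_eq_square)
  then show ?thesis using 1 2 by simp
qed

lemma B_fwd:
  fixes D D' F Fp G Gp K L :: real
  assumes D: "D \<noteq> 0" and G: "G \<noteq> 0"
    and c0: "-2*D^4*D'*G*L - D'*D^2*pz D D' F Fp G K L = 0"
    and c1: "4*D^4*G*(L^2+1) - D'*D^2*(2*D*Gp+G*D') + 2*D^2*L*pz D D' F Fp G K L = 0"
    and c2: "2*D^2*D'*G*L - 2*D'*D^2*G*K + 2*D^2*L*(2*D*Gp+G*D') + D'*pz D D' F Fp G K L = 0"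
    and c3: "4*D^2*G + 4*D^2*L*G*K + D'*(2*D*Gp+G*D') = 0"
    and c4: "2*G*K*D' = 0"
  shows "D' = 0 \<and> K*L + 1 = 0 \<and> Gp = 0 \<and> Fp = 0"
proof -
  have D2: "D^2 \<noteq> 0" using D by simp
  have d0: "D' = 0"
  proof (rule ccontr)
    assume nd: "D' \<noteq> 0"
    then have K: "K = 0" using c4 G by simp
    have "D'*D^2*(2*D^2*G*L + pz D D' F Fp G K L) = 0" using c0 by (simp add: algebra_simps)
    then have p: "pz D D' F Fp G K L = -2*D^2*G*L" using nd D2 by simp
    have h: "D'*(2*D*Gp+G*D') = -4*D^2*G" using c3 K by simp
    have e: "D'*D^2*(2*D*Gp+G*D') = D^2*(D'*(2*D*Gp+G*D'))" by (simp only: ac_simps)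
    have "4*D^4*G*(L^2+1) - D^2*(D'*(2*D*Gp+G*D')) + 2*D^2*L*pz D D' F Fp G K L = 0"
      using c1 unfolding e .
    then have "4*D^4*G*(L^2+1) - D^2*(-4*D^2*G) + 2*D^2*L*(-2*D^2*G*L) = 0"
      unfolding h p .
    then have "8*D^4*G = 0" by (simp add: algebra_simps power2_eq_square power4_eq_xxxx)
    then show False using D G by simp
  qed
  have kl: "K*L + 1 = 0"
  proof -
    have "4*D^2*G*(K*L+1) = 0" using c3 d0 by (simp add: algebra_simps)
    then show ?thesis using D2 G by simp
  qed
  then have L: "L \<noteq> 0" by auto
  have gp: "Gp = 0"
  proof -
    have "4*D^3*L*Gp = 0" using c2 d0 by (simp add: algebra_simps power2_eq_square power3_eq_cube)
    then show ?thesis using D L by simp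
  qed
  have fp: "Fp = 0"
  proof -
    have "4*D^4*G*(L^2+1) + 2*D^2*L*(2*D*Fp + 2*G*K*D^2 - 2*G*D^2*L) = 0"
      using c1 d0 gp unfolding pz_def by simp
    then have "4*D^4*G*(K*L+1) + 4*D^3*L*Fp = 0" by (simp add: algebra_simps power2_eq_square power3_eq_cube power4_eq_xxxx)
    then have "4*D^3*L*Fp = 0" using kl by simp
    then show ?thesis using D L by simp
  qed
  show ?thesis using d0 kl gp fp by simp
qed



lemma bb_cross: "bounded_bilinear cross3"
  using bilinear_cross bilinear_conv_bounded_bilinear by blast

lemma dpar_deriv:
  assumes "(s1 has_vector_derivative s2) (at u)" "(e has_vector_derivative e1') (at u)"
    "(e1 has_vector_derivative e2') (at u)"
  shows "dpar s1 e e1 differentiable (at u)"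
proof -
  have c: "((\<lambda>t. cross3 (e t) (e1 t)) has_vector_derivative
     (cross3 (e u) e2' + cross3 e1' (e1 u))) (at u)"
    by (rule bounded_bilinear.has_vector_derivative[OF bb_cross assms(2,3)])
  have "((\<lambda>t. s1 t \<bullet> cross3 (e t) (e1 t)) has_vector_derivative
     (s1 u \<bullet> (cross3 (e u) e2' + cross3 e1' (e1 u)) + s2 \<bullet> cross3 (e u) (e1 u))) (at u)"
    by (rule bounded_bilinear.has_vector_derivative[OF bounded_bilinear_inner assms(1) c])
  then have "(dpar s1 e e1 has_real_derivative
     (s1 u \<bullet> (cross3 (e u) e2' + cross3 e1' (e1 u)) + s2 \<bullet> cross3 (e u) (e1 u))) (at u)"
    unfolding dpar_def triple_def has_real_derivative_iff_has_vector_derivative .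
  then show ?thesis using real_differentiable_def by blast
qed

lemma e_e1_orth:
  assumes I: "open I" "u \<in> I" and ed: "(e has_vector_derivative e1') (at u)"
    and n: "\<And>t. t \<in> I \<Longrightarrow> norm (e t :: real^3) = 1"
  shows "e u \<bullet> e1' = 0"
proof -
  have "((\<lambda>t. e t \<bullet> e t) has_vector_derivative (e u \<bullet> e1' + e1' \<bullet> e u)) (at u)"
    by (rule bounded_bilinear.has_vector_derivative[OF bounded_bilinear_inner ed ed])
  then have 1: "((\<lambda>t. e t \<bullet> e t) has_real_derivative (2 * (e u \<bullet> e1'))) (at u)"
    unfolding has_real_derivative_iff_has_vector_derivative by (simp add: inner_commute)
  have "((\<lambda>t. 1::real) has_real_derivative 0) (at u)" by simp
  then have 2: "((\<lambda>t. e t \<bullet> e t) has_real_derivative 0) (at u)"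
    by (rule has_field_derivative_transform_within_open[OF _ I]) (simp add: n flip: power2_norm_eq_inner)
  from DERIV_unique[OF 1 2] show ?thesis by simp
qed

lemma s1_norm:
  fixes s1 e e1 :: "real^3"
  assumes "norm e = 1" "norm e1 = 1" "s1 \<bullet> e1 = 0" "e \<bullet> e1 = 0"
  shows "s1 \<bullet> s1 = (s1 \<bullet> e)^2 + (s1 \<bullet> cross3 e e1)^2"
proof -
  have a: "(norm (cross3 s1 e))^2 = (norm s1)^2 - (s1 \<bullet> e)^2"
    using norm_cross[of s1 e] assms(1) by simp
  have "cross3 e1 (cross3 s1 e) = 0"
    using Lagrange[of e1 s1 e] assms by (simp add: inner_commute)
  then have b: "0 = (norm (cross3 s1 e))^2 - (e1 \<bullet> cross3 s1 e)^2"
    using norm_cross[of e1 "cross3 s1 e"] assms(2) by simp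
  have c: "e1 \<bullet> cross3 s1 e = s1 \<bullet> cross3 e e1"
    using cross_triple[of s1 e e1] by (simp add: inner_commute)
  show ?thesis using a b c by (simp add: power2_norm_eq_inner)
qed

lemma xu_cross:
  fixes s1 e e1 :: "real^3"
  shows "cross3 (s1 + v *\<^sub>R e1) e \<bullet> e1 = s1 \<bullet> cross3 e e1"
proof -
  have "cross3 (s1 + v *\<^sub>R e1) e \<bullet> e1 = cross3 s1 e \<bullet> e1"
    by (simp add: cross_add_left cross_mult_left inner_add_left dot_cross_self)
  also have "\<dots> = s1 \<bullet> cross3 e e1" using cross_triple[of s1 e e1] by (simp add: inner_commute)
  finally show ?thesis .
qed

lemma vec_cross:
  fixes x e :: "real^3"
  shows "cross3 (T1 *\<^sub>R x + T2 *\<^sub>R e) (a *\<^sub>R x - b *\<^sub>R e) = (- (T1*b) - T2*a) *\<^sub>R cross3 x e"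
  by (simp add: cross_add_left cross_add_right cross_mult_left cross_mult_right Cross3.right_diff_distrib
      cross_skew[of e x] algebra_simps)

lemma vec_inner:
  fixes x e :: "real^3"
  shows "(T1 *\<^sub>R x + T2 *\<^sub>R e) \<bullet> (a *\<^sub>R x - b *\<^sub>R e) =
     T1*a*(x \<bullet> x) + (T2*a - T1*b)*(x \<bullet> e) - T2*b*(e \<bullet> e)"
  by (simp add: inner_add_left inner_add_right inner_diff_right inner_commute[of e x] algebra_simps)


definition "QA D D' F Fp G Gp K L v = (-G*D'*D^2) + (- pz D D' F Fp G K L) * v + (-2*D*Gp) * v^2 + (-2*G*K) * v^3 + 0 * v^4"

definition "QB D D' F Fp G Gp K L v = (-2*D^4*D'*G*L - D'*D^2*pz D D' F Fp G K L)
       + (4*D^4*G*(L^2+1) - D'*D^2*(2*D*Gp+G*D') + 2*D^2*L*pz D D' F Fp G K L) * v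
       + (2*D^2*D'*G*L - 2*D'*D^2*G*K + 2*D^2*L*(2*D*Gp+G*D') + D'*pz D D' F Fp G K L) * v^2
       + (4*D^2*G + 4*D^2*L*G*K + D'*(2*D*Gp+G*D')) * v^3
       + (2*G*K*D') * v^4"

lemma tchvec_eq:
  assumes dn: "dpar s1 e e1 u \<noteq> 0"
   and dd: "dpar s1 e e1 differentiable (at u)" and fd: "f differentiable (at u)" and gd: "g differentiable (at u)"
  shows "tchvec s1 e e1 e2 f g u v = (g u / dpar s1 e e1 u) *\<^sub>R (s1 u + v *\<^sub>R e1 u) +
     T2c (dpar s1 e e1 u) (deriv (dpar s1 e e1) u) (f u) (deriv f u) (g u) (deriv g u) (ccurv e e1 e2 u) (lam s1 e e1 u) v *\<^sub>R e u"
proof -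
  have D1: "(dpar s1 e e1 has_real_derivative deriv (dpar s1 e e1) u) (at u)"
    using dd DERIV_deriv_iff_real_differentiable by blast
  have F1: "(f has_real_derivative deriv f u) (at u)" using fd DERIV_deriv_iff_real_differentiable by blast
  have G1: "(g has_real_derivative deriv g u) (at u)" using gd DERIV_deriv_iff_real_differentiable by blast
  show ?thesis
    unfolding tchvec_def Let_def tch1_eq[of "dpar s1 e e1" u f g v, OF dn]
      tch2_eq[of "dpar s1 e e1" u, OF dn D1 F1 G1] T2c_def ..
qed

lemma pointA:
  assumes dn: "dpar s1 e e1 u \<noteq> 0"
   and dd: "dpar s1 e e1 differentiable (at u)" and fd: "f differentiable (at u)" and gd: "g differentiable (at u)"
  shows "cross3 (tchvec s1 e e1 e2 f g u v) (kcurve_tan s1 e e1 u v) = 0 \<longleftrightarrow>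
    QA (dpar s1 e e1 u) (deriv (dpar s1 e e1) u) (f u) (deriv f u) (g u) (deriv g u) (ccurv e e1 e2 u) (lam s1 e e1 u) v = 0"
proof -
  let ?D = "dpar s1 e e1 u" and ?D' = "deriv (dpar s1 e e1) u"
  let ?T2 = "T2c ?D ?D' (f u) (deriv f u) (g u) (deriv g u) (ccurv e e1 e2 u) (lam s1 e e1 u) v"
  let ?x = "s1 u + v *\<^sub>R e1 u"
  have k: "kcurve_tan s1 e e1 u v = (2 * ?D * v) *\<^sub>R ?x - (?D' * (?D^2 - v^2)) *\<^sub>R e u"
    unfolding kcurve_tan_def Let_def ..
  have c: "cross3 (tchvec s1 e e1 e2 f g u v) (kcurve_tan s1 e e1 u v) =
     (- ((g u / ?D) * (?D' * (?D^2 - v^2))) - ?T2 * (2 * ?D * v)) *\<^sub>R cross3 ?x (e u)"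
    unfolding tchvec_eq[OF dn dd fd gd] k by (rule vec_cross)
  have nz: "cross3 ?x (e u) \<noteq> 0"
  proof
    assume "cross3 ?x (e u) = 0"
    then have "cross3 ?x (e u) \<bullet> e1 u = 0" by simp
    then show False using xu_cross[of "s1 u" v "e1 u" "e u"] dn by (simp add: dpar_def triple_def)
  qed
  have s: "- ((g u / ?D) * (?D' * (?D^2 - v^2))) - ?T2 * (2 * ?D * v) =
     (g u / ?D) * (- (?D' * (?D^2 - v^2))) - ?T2 * (2 * ?D * v)" by simp
  show ?thesis unfolding c s QA_eq[OF dn] QA_def using nz dn by simp
qed

lemma pointB:
  assumes dn: "dpar s1 e e1 u \<noteq> 0"
   and dd: "dpar s1 e e1 differentiable (at u)" and fd: "f differentiable (at u)" and gd: "g differentiable (at u)"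
   and n1: "norm (e u) = 1" and n2: "norm (e1 u) = 1" and o1: "s1 u \<bullet> e1 u = 0" and o2: "e u \<bullet> e1 u = 0"
  shows "tchvec s1 e e1 e2 f g u v \<bullet> kcurve_tan s1 e e1 u v = 0 \<longleftrightarrow>
    QB (dpar s1 e e1 u) (deriv (dpar s1 e e1) u) (f u) (deriv f u) (g u) (deriv g u) (ccurv e e1 e2 u) (lam s1 e e1 u) v = 0"
proof -
  let ?D = "dpar s1 e e1 u" and ?D' = "deriv (dpar s1 e e1) u" and ?L = "lam s1 e e1 u"
  let ?T2 = "T2c ?D ?D' (f u) (deriv f u) (g u) (deriv g u) (ccurv e e1 e2 u) (lam s1 e e1 u) v"
  let ?x = "s1 u + v *\<^sub>R e1 u"
  have k: "kcurve_tan s1 e e1 u v = (2 * ?D * v) *\<^sub>R ?x - (?D' * (?D^2 - v^2)) *\<^sub>R e u"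
    unfolding kcurve_tan_def Let_def ..
  have se: "s1 u \<bullet> e u = ?D * ?L" using dn by (simp add: lam_def)
  have ee: "e u \<bullet> e u = 1" using n1 by (simp add: power2_norm_eq_inner[symmetric])
  have e11: "e1 u \<bullet> e1 u = 1" using n2 by (simp add: power2_norm_eq_inner[symmetric])
  have ss: "s1 u \<bullet> s1 u = (?D * ?L)^2 + ?D^2"
    using s1_norm[OF n1 n2 o1 o2] se by (simp add: dpar_def triple_def)
  have xx: "?x \<bullet> ?x = ?D^2*?L^2 + ?D^2 + v^2"
    using ss e11 o1 by (simp add: inner_add_left inner_add_right inner_commute[of "e1 u" "s1 u"] power2_eq_square algebra_simps)
  have xe: "?x \<bullet> e u = ?D * ?L"
    using se o2 by (simp add: inner_add_left inner_commute[of "e1 u" "e u"])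
  have c: "tchvec s1 e e1 e2 f g u v \<bullet> kcurve_tan s1 e e1 u v =
     (g u / ?D) * (2 * ?D * v) * (?D^2*?L^2 + ?D^2 + v^2) + (?T2 * (2 * ?D * v) - (g u / ?D) * (?D' * (?D^2 - v^2))) * (?D*?L)
     - ?T2 * (?D' * (?D^2 - v^2))"
    unfolding tchvec_eq[OF dn dd fd gd] k vec_inner xx xe ee by simp
  show ?thesis unfolding c QB_eq[OF dn] QB_def using dn by simp
qed


theorem proposition7:
  fixes s s1 s2 s3 e e1 e2 e3 :: "real \<Rightarrow> real^3"
    and f g :: "real \<Rightarrow> real" and I :: "real set"
  assumes I: "open I" "is_interval I"
    and s_d: "\<And>u. u \<in> I \<Longrightarrow> (s has_vector_derivative s1 u) (at u)"
    and s1_d: "\<And>u. u \<in> I \<Longrightarrow> (s1 has_vector_derivative s2 u) (at u)"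
    and s2_d: "\<And>u. u \<in> I \<Longrightarrow> (s2 has_vector_derivative s3 u) (at u)"
    and s3_c: "continuous_on I s3"
    and e_d: "\<And>u. u \<in> I \<Longrightarrow> (e has_vector_derivative e1 u) (at u)"
    and e1_d: "\<And>u. u \<in> I \<Longrightarrow> (e1 has_vector_derivative e2 u) (at u)"
    and e2_d: "\<And>u. u \<in> I \<Longrightarrow> (e2 has_vector_derivative e3 u) (at u)"
    and e3_c: "continuous_on I e3"
    and std: "\<And>u. u \<in> I \<Longrightarrow> norm (e u) = 1 \<and> norm (e1 u) = 1 \<and> s1 u \<bullet> e1 u = 0"
    and skew: "\<And>u. u \<in> I \<Longrightarrow> dpar s1 e e1 u \<noteq> 0"
    and f_d: "\<And>u. u \<in> I \<Longrightarrow> f differentiable (at u)"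
    and g_d: "\<And>u. u \<in> I \<Longrightarrow> g differentiable (at u)"
    and f_nz: "\<exists>u\<in>I. f u \<noteq> 0"
    and g_nz: "\<exists>u\<in>I. g u \<noteq> 0"
  shows
    "((\<forall>u\<in>I. \<forall>v. f u + g u * v \<noteq> 0 \<longrightarrow>
          cross3 (tchvec s1 e e1 e2 f g u v) (kcurve_tan s1 e e1 u v) = 0)
      \<longleftrightarrow>
      (conoidal e e1 e2 I
       \<and> (\<exists>c1. c1 \<noteq> 0 \<and> (\<forall>u\<in>I. dpar s1 e e1 u = c1)
         \<and> (\<exists>c2. c2 \<noteq> 0 \<and> (\<forall>u\<in>I. g u = c2)
           \<and> (\<exists>F c3. (\<forall>u\<in>I. (F has_real_derivative lam s1 e e1 u) (at u))
                    \<and> (\<forall>u\<in>I. f u = c1 * c2 * F u + c3))))))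
     \<and>
     ((\<forall>u\<in>I. \<forall>v. f u + g u * v \<noteq> 0 \<longrightarrow>
          tchvec s1 e e1 e2 f g u v \<bullet> kcurve_tan s1 e e1 u v = 0)
      \<longleftrightarrow>
      (edlinger s1 e e1 e2 I
       \<and> (\<exists>c1. c1 \<noteq> 0 \<and> (\<forall>u\<in>I. g u = c1))
       \<and> (\<exists>c2. c2 \<noteq> 0 \<and> (\<forall>u\<in>I. f u = c2))))"
proof -
  let ?d = "dpar s1 e e1" and ?k = "ccurv e e1 e2" and ?l = "lam s1 e e1"
  have dd: "\<And>u. u \<in> I \<Longrightarrow> ?d differentiable (at u)"
    using dpar_deriv s1_d e_d e1_d by blast
  have D1: "\<And>u. u \<in> I \<Longrightarrow> (?d has_real_derivative deriv ?d u) (at u)"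
    using dd DERIV_deriv_iff_real_differentiable by blast
  have F1: "\<And>u. u \<in> I \<Longrightarrow> (f has_real_derivative deriv f u) (at u)"
    using f_d DERIV_deriv_iff_real_differentiable by blast
  have G1: "\<And>u. u \<in> I \<Longrightarrow> (g has_real_derivative deriv g u) (at u)"
    using g_d DERIV_deriv_iff_real_differentiable by blast
  have orth: "\<And>u. u \<in> I \<Longrightarrow> e u \<bullet> e1 u = 0"
    using e_e1_orth[OF I(1) _ e_d] std by blast
  have cvx: "convex I" using I(2) is_interval_convex by blast
  have zero_const: "\<exists>c. \<forall>u\<in>I. h u = c" if "\<And>u. u \<in> I \<Longrightarrow> (h has_real_derivative 0) (at u)" for h :: "real \<Rightarrow> real"
    using has_field_derivative_zero_constant[OF cvx] that has_field_derivative_at_within by blast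
  have deriv_const: "deriv h u = 0" if "u \<in> I" "\<And>u. u \<in> I \<Longrightarrow> h u = c"
     "(h has_real_derivative deriv h u) (at u)" for h :: "real \<Rightarrow> real" and u c
  proof -
    have "((\<lambda>t. c) has_real_derivative 0) (at u)" by simp
    then have "(h has_real_derivative 0) (at u)"
      by (rule has_field_derivative_transform_within_open[OF _ I(1) that(1)]) (simp add: that(2))
    then show ?thesis using DERIV_unique that(3) by blast
  qed
  obtain u0 where u0: "u0 \<in> I" "g u0 \<noteq> 0" using g_nz by blast
  have partA: "(\<forall>u\<in>I. \<forall>v. f u + g u * v \<noteq> 0 \<longrightarrow>
          cross3 (tchvec s1 e e1 e2 f g u v) (kcurve_tan s1 e e1 u v) = 0) \<longleftrightarrow>
      (conoidal e e1 e2 I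
       \<and> (\<exists>c1. c1 \<noteq> 0 \<and> (\<forall>u\<in>I. dpar s1 e e1 u = c1)
         \<and> (\<exists>c2. c2 \<noteq> 0 \<and> (\<forall>u\<in>I. g u = c2)
           \<and> (\<exists>F c3. (\<forall>u\<in>I. (F has_real_derivative lam s1 e e1 u) (at u))
                    \<and> (\<forall>u\<in>I. f u = c1 * c2 * F u + c3)))))" (is "?L \<longleftrightarrow> ?R")
  proof
    assume H: ?L
    have loc: "deriv ?d u = 0 \<and> deriv g u = 0 \<and> ?k u = 0 \<and> deriv f u = g u * ?d u * ?l u"
      if u: "u \<in> I" "g u \<noteq> 0" for u
    proof -
      have "\<forall>v. f u + g u * v \<noteq> 0 \<longrightarrow>
        QA (?d u) (deriv ?d u) (f u) (deriv f u) (g u) (deriv g u) (?k u) (?l u) v = 0"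
        using H pointA[OF skew[OF u(1)] dd[OF u(1)] f_d[OF u(1)] g_d[OF u(1)]] u(1) by blast
      then have "\<forall>v. f u + g u * v \<noteq> 0 \<longrightarrow>
        (-g u*deriv ?d u*?d u^2) + (- pz (?d u) (deriv ?d u) (f u) (deriv f u) (g u) (?k u) (?l u)) * v
        + (-2*?d u*deriv g u) * v^2 + (-2*g u*?k u) * v^3 + 0 * v^4 = 0"
        unfolding QA_def .
      from poly4_zero[OF this] u(2) have
        "-g u*deriv ?d u*?d u^2 = 0" "- pz (?d u) (deriv ?d u) (f u) (deriv f u) (g u) (?k u) (?l u) = 0"
        "-2*?d u*deriv g u = 0" "-2*g u*?k u = 0" by auto
      from A_fwd[OF skew[OF u(1)] u(2) this] show ?thesis .
    qed
    have gdf: "\<forall>u\<in>I. g differentiable (at u)" using g_d by blast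
    have gdz: "\<forall>u\<in>I. g u \<noteq> 0 \<longrightarrow> deriv g u = 0" using loc by blast
    have gc: "\<forall>u\<in>I. g u = g u0"
      by (rule loc_const[OF I(2) I(1) gdf u0(1) u0(2) gdz])
    then have gnz: "\<And>u. u \<in> I \<Longrightarrow> g u \<noteq> 0" using u0 by metis
    have dz: "(?d has_real_derivative 0) (at u)" if u: "u \<in> I" for u
      using D1[OF u] loc[OF u gnz[OF u]] by simp
    obtain c1 where c1: "\<forall>u\<in>I. ?d u = c1"
      using zero_const[of ?d, OF dz] by blast
    have c1nz: "c1 \<noteq> 0" using c1 skew[OF u0(1)] u0(1) by simp
    define c2 where "c2 = g u0"
    have c2nz: "c2 \<noteq> 0" using u0 by (simp add: c2_def)
    have Fd: "((\<lambda>t. f t / (c1 * c2)) has_real_derivative ?l u) (at u)" if u: "u \<in> I" for u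
    proof -
      have dfu: "((\<lambda>t. f t / (c1 * c2)) has_real_derivative deriv f u / (c1 * c2)) (at u)"
        using F1[OF u] c1nz c2nz by (auto intro!: derivative_eq_intros)
      have gu: "g u = c2" using gc u unfolding c2_def by blast
      have du: "?d u = c1" using c1 u by blast
      have "deriv f u / (c1 * c2) = ?l u"
        using loc[OF u gnz[OF u]] c1nz c2nz unfolding gu du by simp
      then show ?thesis using dfu by simp
    qed
    show ?R
    proof (intro conjI exI)
      show "conoidal e e1 e2 I" unfolding conoidal_def using loc gnz by blast
      show "c1 \<noteq> 0" "\<forall>u\<in>I. ?d u = c1" by fact+
      show "c2 \<noteq> 0" "\<forall>u\<in>I. g u = c2" using c2nz gc unfolding c2_def by blast+
      show "\<forall>u\<in>I. ((\<lambda>t. f t / (c1 * c2)) has_real_derivative ?l u) (at u)" using Fd by blast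
      show "\<forall>u\<in>I. f u = c1 * c2 * (f u / (c1 * c2)) + 0" using c1nz c2nz by simp
    qed
  next
    assume ?R
    then obtain c1 c2 F c3 where con: "conoidal e e1 e2 I" and c1: "c1 \<noteq> 0" "\<forall>u\<in>I. ?d u = c1"
      and c2: "c2 \<noteq> 0" "\<forall>u\<in>I. g u = c2" and F: "\<forall>u\<in>I. (F has_real_derivative ?l u) (at u)"
      and fF: "\<forall>u\<in>I. f u = c1 * c2 * F u + c3" by blast
    show ?L
    proof (intro ballI allI impI)
      fix u v assume u: "u \<in> I" and "f u + g u * v \<noteq> 0"
      have d0: "deriv ?d u = 0" using deriv_const[OF u _ D1[OF u]] c1 by blast
      have g0: "deriv g u = 0" using deriv_const[OF u _ G1[OF u]] c2 by blast
      have "((\<lambda>t. c1 * c2 * F t + c3) has_real_derivative c1 * c2 * ?l u) (at u)"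
        using F u by (auto intro!: derivative_eq_intros)
      then have "(f has_real_derivative c1 * c2 * ?l u) (at u)"
        by (rule has_field_derivative_transform_within_open[OF _ I(1) u]) (simp add: fF)
      then have f0: "deriv f u = c1 * c2 * ?l u" by (rule DERIV_imp_deriv)
      have k0: "?k u = 0" using con u by (simp add: conoidal_def)
      have "QA (?d u) (deriv ?d u) (f u) (deriv f u) (g u) (deriv g u) (?k u) (?l u) v = 0"
        unfolding QA_def pz_def d0 g0 f0 k0 using c1 c2 u by (simp add: power2_eq_square)
      then show "cross3 (tchvec s1 e e1 e2 f g u v) (kcurve_tan s1 e e1 u v) = 0"
        using pointA[OF skew[OF u] dd[OF u] f_d[OF u] g_d[OF u]] by blast
    qed
  qed
  have partB: "(\<forall>u\<in>I. \<forall>v. f u + g u * v \<noteq> 0 \<longrightarrow>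
          tchvec s1 e e1 e2 f g u v \<bullet> kcurve_tan s1 e e1 u v = 0) \<longleftrightarrow>
      (edlinger s1 e e1 e2 I
       \<and> (\<exists>c1. c1 \<noteq> 0 \<and> (\<forall>u\<in>I. g u = c1))
       \<and> (\<exists>c2. c2 \<noteq> 0 \<and> (\<forall>u\<in>I. f u = c2)))" (is "?L \<longleftrightarrow> ?R")
  proof
    assume H: ?L
    have loc: "deriv ?d u = 0 \<and> ?k u * ?l u + 1 = 0 \<and> deriv g u = 0 \<and> deriv f u = 0"
      if u: "u \<in> I" "g u \<noteq> 0" for u
    proof -
      have "\<forall>v. f u + g u * v \<noteq> 0 \<longrightarrow>
        QB (?d u) (deriv ?d u) (f u) (deriv f u) (g u) (deriv g u) (?k u) (?l u) v = 0"
        using H pointB[OF skew[OF u(1)] dd[OF u(1)] f_d[OF u(1)] g_d[OF u(1)]] u(1) std orth by blast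
      then have "\<forall>v. f u + g u * v \<noteq> 0 \<longrightarrow>
        (-2*?d u^4*deriv ?d u*g u*?l u - deriv ?d u*?d u^2*pz (?d u) (deriv ?d u) (f u) (deriv f u) (g u) (?k u) (?l u))
       + (4*?d u^4*g u*(?l u^2+1) - deriv ?d u*?d u^2*(2*?d u*deriv g u+g u*deriv ?d u) + 2*?d u^2*?l u*pz (?d u) (deriv ?d u) (f u) (deriv f u) (g u) (?k u) (?l u)) * v
       + (2*?d u^2*deriv ?d u*g u*?l u - 2*deriv ?d u*?d u^2*g u*?k u + 2*?d u^2*?l u*(2*?d u*deriv g u+g u*deriv ?d u) + deriv ?d u*pz (?d u) (deriv ?d u) (f u) (deriv f u) (g u) (?k u) (?l u)) * v^2
       + (4*?d u^2*g u + 4*?d u^2*?l u*g u*?k u + deriv ?d u*(2*?d u*deriv g u+g u*deriv ?d u)) * v^3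
       + (2*g u*?k u*deriv ?d u) * v^4 = 0"
        unfolding QB_def .
      from poly4_zero[OF this] u(2) have c:
        "-2*?d u^4*deriv ?d u*g u*?l u - deriv ?d u*?d u^2*pz (?d u) (deriv ?d u) (f u) (deriv f u) (g u) (?k u) (?l u) = 0"
        "4*?d u^4*g u*(?l u^2+1) - deriv ?d u*?d u^2*(2*?d u*deriv g u+g u*deriv ?d u) + 2*?d u^2*?l u*pz (?d u) (deriv ?d u) (f u) (deriv f u) (g u) (?k u) (?l u) = 0"
        "2*?d u^2*deriv ?d u*g u*?l u - 2*deriv ?d u*?d u^2*g u*?k u + 2*?d u^2*?l u*(2*?d u*deriv g u+g u*deriv ?d u) + deriv ?d u*pz (?d u) (deriv ?d u) (f u) (deriv f u) (g u) (?k u) (?l u) = 0"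
        "4*?d u^2*g u + 4*?d u^2*?l u*g u*?k u + deriv ?d u*(2*?d u*deriv g u+g u*deriv ?d u) = 0"
        "2*g u*?k u*deriv ?d u = 0" by auto
      from B_fwd[OF skew[OF u(1)] u(2) c] show ?thesis .
    qed
    have gdf: "\<forall>u\<in>I. g differentiable (at u)" using g_d by blast
    have gdz: "\<forall>u\<in>I. g u \<noteq> 0 \<longrightarrow> deriv g u = 0" using loc by blast
    have gc: "\<forall>u\<in>I. g u = g u0"
      by (rule loc_const[OF I(2) I(1) gdf u0(1) u0(2) gdz])
    then have gnz: "\<And>u. u \<in> I \<Longrightarrow> g u \<noteq> 0" using u0 by metis
    have fz: "(f has_real_derivative 0) (at u)" if u: "u \<in> I" for u
      using F1[OF u] loc[OF u gnz[OF u]] by simp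
    obtain c2 where c2: "\<forall>u\<in>I. f u = c2"
      using zero_const[of f, OF fz] by blast
    have c2nz: "c2 \<noteq> 0" using c2 f_nz by auto
    show ?R
    proof (intro conjI exI)
      show "edlinger s1 e e1 e2 I" unfolding edlinger_def using loc gnz by blast
      show "g u0 \<noteq> 0" "\<forall>u\<in>I. g u = g u0" using u0 gc by blast+
      show "c2 \<noteq> 0" "\<forall>u\<in>I. f u = c2" by fact+
    qed
  next
    assume ?R
    then obtain c1 c2 where ed: "edlinger s1 e e1 e2 I" and c1: "c1 \<noteq> 0" "\<forall>u\<in>I. g u = c1"
      and c2: "c2 \<noteq> 0" "\<forall>u\<in>I. f u = c2" by blast
    show ?L
    proof (intro ballI allI impI)
      fix u v assume u: "u \<in> I" and "f u + g u * v \<noteq> 0"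
      have d0: "deriv ?d u = 0" and kl: "?k u * ?l u = -1" using ed u by (auto simp: edlinger_def)
      have g0: "deriv g u = 0" using deriv_const[OF u _ G1[OF u]] c1 by blast
      have f0: "deriv f u = 0" using deriv_const[OF u _ F1[OF u]] c2 by blast
      let ?D = "?d u" and ?G = "g u" and ?K = "?k u" and ?Lm = "?l u"
      have e1: "4*?D^4*?G*(?Lm^2+1) + 2*?D^2*?Lm*(2*?G*?K*?D^2 - 2*?G*?D^2*?Lm) = 4*?D^4*?G*(1 + ?K*?Lm)"
        by (simp add: algebra_simps power2_eq_square power4_eq_xxxx)
      have e2: "4*?D^2*?G + 4*?D^2*?Lm*?G*?K = 4*?D^2*?G*(1 + ?K*?Lm)"
        by (simp add: algebra_simps)
      have "QB (?d u) (deriv ?d u) (f u) (deriv f u) (g u) (deriv g u) (?k u) (?l u) v = 0"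
        unfolding QB_def pz_def d0 g0 f0 using e1 e2 kl by simp
      then show "tchvec s1 e e1 e2 f g u v \<bullet> kcurve_tan s1 e e1 u v = 0"
        using pointB[OF skew[OF u] dd[OF u] f_d[OF u] g_d[OF u]] std[OF u] orth[OF u] by blast
    qed
  qed
  show ?thesis using partA partB by blast
qed


end
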